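(* In the altruistic controlled social learning model described in the context, $V^*_A(b)\le0$ for all $b\in[0,1]$, $V^*_A(b)=V^*_A(1-b)$ for all $b\in[0,1]$, and $V^*_A(0)=V^*_A(1)=0$, with $\pi^*_A(0)=\pi^*_A(1)=p$.
   Context: A binary state $\omega\in\{G,B\}$ is drawn once. Agents $i=1,2,\dots$ act in sequence; a planner chooses precision $q_i\in[0.5,1]$ and agent $i$ receives a private signal $s_i$ with $\mathbb{P}(s_i=\omega)=q_i$, conditionally independent given $\omega$. Let $y(b,q)=1+2bq-b-q$, $z(b,q)=b+q-2bq$. With public belief $b_i$, agent $i$ takes $a_i=s_i$ if $1-q_i\le b_i\le q_i$, $G$ if $b_i>q_i$, $B$ if $b_i<1-q_i$; the public belief becomes $\frac{q_ib_i}{y(b_i,q_i)}$ (if $s_i=G$) or $\frac{(1-q_i)b_i}{z(b_i,q_i)}$ (if $s_i=B$) when $1-q_i\le b_i\le q_i$, and stays $b_i$ otherwise. With $C>0$, baseline $p\in[0.5,1)$ and cost $\beta:[0.5,1]\to[0,\infty)$ non-negative, increasing, continuous, concave with $\beta(p)=0$, the altruistic reward is $r_A(b,q)=-\beta(q)-C\min(b,1-b,1-q)$. Policies are deterministic Markov maps $\pi:[0,1]\to[0.5,1]$; for $\delta\in[0,1)$, $V^\pi_A(b)=\mathbb{E}[\sum_{i\ge1}\delta^{i-1}r_A(b_i,\pi(b_i))\mid b_1=b]$, $V^*_A=\sup_\pi V^\pi_A$, and $\pi^*_A$ is an optimal policy. *)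

theory Defs
  imports "HOL-Analysis.Analysis"
begin

definition yy :: "real \<Rightarrow> real \<Rightarrow> real" where
  "yy b q = 1 + 2*b*q - b - q"

definition zz :: "real \<Rightarrow> real \<Rightarrow> real" where
  "zz b q = b + q - 2*b*q"

definition rA :: "(real \<Rightarrow> real) \<Rightarrow> real \<Rightarrow> real \<Rightarrow> real \<Rightarrow> real" where
  "rA \<beta> C b q = - \<beta> q - C * min b (min (1 - b) (1 - q))"

(* The public belief is a Markov chain: if 1-q \<le> b \<le> q, it moves to q b / y(b,q)
   with probability y(b,q) = P(s = G | belief b) and to (1-q) b / z(b,q) with
   probability z(b,q); otherwise it stays at b. *)
fun VAn :: "(real \<Rightarrow> real) \<Rightarrow> real \<Rightarrow> real \<Rightarrow> (real \<Rightarrow> real) \<Rightarrow> nat \<Rightarrow> real \<Rightarrow> real" where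
  "VAn \<beta> C \<delta> \<pi> 0 b = 0"
| "VAn \<beta> C \<delta> \<pi> (Suc n) b =
     (let q = \<pi> b in
      rA \<beta> C b q + \<delta> *
        (if 1 - q \<le> b \<and> b \<le> q
         then yy b q * VAn \<beta> C \<delta> \<pi> n (q * b / yy b q)
            + zz b q * VAn \<beta> C \<delta> \<pi> n ((1 - q) * b / zz b q)
         else VAn \<beta> C \<delta> \<pi> n b))"

definition VA :: "(real \<Rightarrow> real) \<Rightarrow> real \<Rightarrow> real \<Rightarrow> (real \<Rightarrow> real) \<Rightarrow> real \<Rightarrow> real" where
  "VA \<beta> C \<delta> \<pi> b = lim (\<lambda>n. VAn \<beta> C \<delta> \<pi> n b)"

definition policy :: "(real \<Rightarrow> real) \<Rightarrow> bool" where
  "policy \<pi> \<longleftrightarrow> (\<forall>b\<in>{0..1}. \<pi> b \<in> {1/2..1})"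

definition VAstar :: "(real \<Rightarrow> real) \<Rightarrow> real \<Rightarrow> real \<Rightarrow> real \<Rightarrow> real" where
  "VAstar \<beta> C \<delta> b = (SUP \<pi>\<in>{\<pi>. policy \<pi>}. VA \<beta> C \<delta> \<pi> b)"

definition optimal :: "(real \<Rightarrow> real) \<Rightarrow> real \<Rightarrow> real \<Rightarrow> (real \<Rightarrow> real) \<Rightarrow> bool" where
  "optimal \<beta> C \<delta> \<pi> \<longleftrightarrow> policy \<pi> \<and> (\<forall>b\<in>{0..1}. VA \<beta> C \<delta> \<pi> b = VAstar \<beta> C \<delta> b)"

end

theory Submission
  imports Defs
begin

lemma step_facts:
  fixes b q :: real
  assumes b: "0 \<le> b" "b \<le> 1" and q: "1/2 \<le> q" "q \<le> 1"
  shows "0 \<le> yy b q" "0 \<le> zz b q" "yy b q + zz b q = 1"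
    "0 \<le> q*b/yy b q" "q*b/yy b q \<le> 1"
    "0 \<le> (1-q)*b/zz b q" "(1-q)*b/zz b q \<le> 1"
proof -
  have e1: "yy b q = b*q + (1-b)*(1-q)" unfolding yy_def by algebra
  have e2: "zz b q = b*(1-q) + (1-b)*q" unfolding zz_def by algebra
  have p1: "0 \<le> b*q" "0 \<le> (1-b)*(1-q)" "0 \<le> b*(1-q)" "0 \<le> (1-b)*q"
    using b q by auto
  show y0: "0 \<le> yy b q" and z0: "0 \<le> zz b q" using e1 e2 p1 by auto
  show "yy b q + zz b q = 1" unfolding yy_def zz_def by simp
  show "0 \<le> q*b/yy b q" using y0 b q by simp
  show "0 \<le> (1-q)*b/zz b q" using z0 b q by simp
  show "q*b/yy b q \<le> 1"
  proof (cases "yy b q = 0")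
    case False then show ?thesis using e1 p1 y0 by (simp add: divide_le_eq_1 mult.commute)
  qed simp
  show "(1-q)*b/zz b q \<le> 1"
  proof (cases "zz b q = 0")
    case False then show ?thesis using e2 p1 z0 by (simp add: divide_le_eq_1 mult.commute)
  qed simp
qed

lemma rA_bounds:
  assumes nn: "\<forall>q\<in>{1/2..1}. \<beta> q \<ge> 0" and mo: "mono_on {1/2..1} \<beta>" and C: "C > 0"
    and b: "0 \<le> b" "b \<le> 1" and q: "1/2 \<le> q" "q \<le> 1"
  shows "rA \<beta> C b q \<le> 0" "- (\<beta> 1 + C) \<le> rA \<beta> C b q"
proof -
  have "\<beta> q \<le> \<beta> 1" using mo q by (auto intro: mono_onD)
  moreover have "0 \<le> \<beta> q" using nn q by auto
  moreover have m0: "0 \<le> min b (min (1 - b) (1 - q))" "min b (min (1 - b) (1 - q)) \<le> 1"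
    using b q by auto
  moreover have "0 \<le> C * min b (min (1 - b) (1 - q))" "C * min b (min (1 - b) (1 - q)) \<le> C"
    using m0 C by (auto simp: mult_le_cancel_left1)
  ultimately show "rA \<beta> C b q \<le> 0" "- (\<beta> 1 + C) \<le> rA \<beta> C b q"
    unfolding rA_def by linarith+
qed

lemma VAn_bound:
  assumes nn: "\<forall>q\<in>{1/2..1}. \<beta> q \<ge> 0" and mo: "mono_on {1/2..1} \<beta>" and C: "C > 0"
    and d: "0 \<le> \<delta>" "\<delta> < 1" and pol: "policy \<pi>"
  shows "b \<in> {0..1} \<Longrightarrow> \<bar>VAn \<beta> C \<delta> \<pi> n b\<bar> \<le> (\<beta> 1 + C) / (1 - \<delta>)"
proof (induction n arbitrary: b)
  case 0
  have "0 \<le> \<beta> 1" using nn by auto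
  then show ?case using C d by simp
next
  case (Suc n)
  define K where "K = (\<beta> 1 + C) / (1 - \<delta>)"
  define q where "q = \<pi> b"
  have b: "0 \<le> b" "b \<le> 1" using Suc.prems by auto
  have q: "1/2 \<le> q" "q \<le> 1" using pol Suc.prems unfolding policy_def q_def by auto
  note sf = step_facts[OF b q]
  note rb = rA_bounds[OF nn mo C b q]
  have IH1: "\<bar>VAn \<beta> C \<delta> \<pi> n (q*b/yy b q)\<bar> \<le> K" using Suc.IH sf unfolding K_def by auto
  have IH2: "\<bar>VAn \<beta> C \<delta> \<pi> n ((1-q)*b/zz b q)\<bar> \<le> K" using Suc.IH sf unfolding K_def by auto
  have IH3: "\<bar>VAn \<beta> C \<delta> \<pi> n b\<bar> \<le> K" using Suc.IH Suc.prems unfolding K_def by auto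
  define E where "E = (if 1 - q \<le> b \<and> b \<le> q
         then yy b q * VAn \<beta> C \<delta> \<pi> n (q * b / yy b q)
            + zz b q * VAn \<beta> C \<delta> \<pi> n ((1 - q) * b / zz b q)
         else VAn \<beta> C \<delta> \<pi> n b)"
  have "\<bar>E\<bar> \<le> K"
  proof (cases "1 - q \<le> b \<and> b \<le> q")
    case True
    have "\<bar>yy b q * VAn \<beta> C \<delta> \<pi> n (q * b / yy b q)\<bar> \<le> yy b q * K"
      using IH1 sf by (simp add: abs_mult mult_left_mono)
    moreover have "\<bar>zz b q * VAn \<beta> C \<delta> \<pi> n ((1-q) * b / zz b q)\<bar> \<le> zz b q * K"
      using IH2 sf by (simp add: abs_mult mult_left_mono)
    ultimately have "\<bar>E\<bar> \<le> (yy b q + zz b q) * K" using True unfolding E_def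
      by (simp add: distrib_right)
    then show ?thesis using sf by simp
  next
    case False then show ?thesis using IH3 unfolding E_def if_not_P[OF False] by blast
  qed
  then have "\<bar>\<delta> * E\<bar> \<le> \<delta> * K" using d by (simp add: abs_mult mult_left_mono)
  moreover have "(\<beta> 1 + C) + \<delta> * K = K" using d unfolding K_def by (simp add: field_simps)
  moreover have "VAn \<beta> C \<delta> \<pi> (Suc n) b = rA \<beta> C b q + \<delta> * E"
    unfolding E_def q_def by (simp add: Let_def)
  ultimately show ?case using rb unfolding K_def[symmetric] by linarith
qed

lemma VAn_diff:
  assumes nn: "\<forall>q\<in>{1/2..1}. \<beta> q \<ge> 0" and mo: "mono_on {1/2..1} \<beta>" and C: "C > 0"
    and d: "0 \<le> \<delta>" "\<delta> < 1" and pol: "policy \<pi>"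
  shows "b \<in> {0..1} \<Longrightarrow> \<bar>VAn \<beta> C \<delta> \<pi> (Suc n) b - VAn \<beta> C \<delta> \<pi> n b\<bar> \<le> \<delta>^n * (\<beta> 1 + C)"
proof (induction n arbitrary: b)
  case 0
  have b: "0 \<le> b" "b \<le> 1" using 0 by auto
  have q: "1/2 \<le> \<pi> b" "\<pi> b \<le> 1" using pol 0 unfolding policy_def by auto
  note rb = rA_bounds[OF nn mo C b q]
  show ?case using rb by (simp add: Let_def)
next
  case (Suc n)
  define K where "K = \<delta>^n * (\<beta> 1 + C)"
  define q where "q = \<pi> b"
  define V where "V = VAn \<beta> C \<delta> \<pi>"
  define D where "D = (\<lambda>x. V (Suc n) x - V n x)"
  have b: "0 \<le> b" "b \<le> 1" using Suc.prems by auto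
  have q: "1/2 \<le> q" "q \<le> 1" using pol Suc.prems unfolding policy_def q_def by auto
  note sf = step_facts[OF b q]
  have IH1: "\<bar>D (q*b/yy b q)\<bar> \<le> K" using Suc.IH sf unfolding K_def D_def V_def by auto
  have IH2: "\<bar>D ((1-q)*b/zz b q)\<bar> \<le> K" using Suc.IH sf unfolding K_def D_def V_def by auto
  have IH3: "\<bar>D b\<bar> \<le> K" using Suc.IH Suc.prems unfolding K_def D_def V_def by auto
  define E where "E = (if 1 - q \<le> b \<and> b \<le> q
         then yy b q * D (q * b / yy b q)
            + zz b q * D ((1 - q) * b / zz b q)
         else D b)"
  have "\<bar>E\<bar> \<le> K"
  proof (cases "1 - q \<le> b \<and> b \<le> q")
    case True
    have "\<bar>yy b q * D (q * b / yy b q)\<bar> \<le> yy b q * K"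
      using IH1 sf by (simp add: abs_mult mult_left_mono)
    moreover have "\<bar>zz b q * D ((1-q) * b / zz b q)\<bar> \<le> zz b q * K"
      using IH2 sf by (simp add: abs_mult mult_left_mono)
    ultimately have "\<bar>E\<bar> \<le> (yy b q + zz b q) * K" using True unfolding E_def
      by (simp add: distrib_right)
    then show ?thesis using sf by simp
  next
    case False then show ?thesis using IH3 unfolding E_def if_not_P[OF False] by blast
  qed
  then have "\<bar>\<delta> * E\<bar> \<le> \<delta> * K" using d by (simp add: abs_mult mult_left_mono)
  moreover have "V (Suc (Suc n)) b - V (Suc n) b = \<delta> * E"
    unfolding E_def q_def D_def V_def by (simp add: Let_def algebra_simps)
  ultimately show ?case unfolding K_def V_def by (simp add: mult.assoc)
qed

lemma VAn_lim:
  assumes nn: "\<forall>q\<in>{1/2..1}. \<beta> q \<ge> 0" and mo: "mono_on {1/2..1} \<beta>" and C: "C > 0"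
    and d: "0 \<le> \<delta>" "\<delta> < 1" and pol: "policy \<pi>" and b: "b \<in> {0..1}"
  shows "(\<lambda>n. VAn \<beta> C \<delta> \<pi> n b) \<longlonglongrightarrow> VA \<beta> C \<delta> \<pi> b"
proof -
  define f where "f = (\<lambda>k. VAn \<beta> C \<delta> \<pi> (Suc k) b - VAn \<beta> C \<delta> \<pi> k b)"
  have "summable (\<lambda>k. \<delta>^k * (\<beta> 1 + C))"
    using d by (intro summable_mult2 summable_geometric) simp
  moreover have "\<forall>k. norm (f k) \<le> \<delta>^k * (\<beta> 1 + C)"
    using VAn_diff[OF nn mo C d pol b] unfolding f_def by simp
  ultimately have "summable f" by (metis summable_comparison_test)
  then have "(\<lambda>n. \<Sum>i<n. f i) \<longlonglongrightarrow> suminf f" by (rule summable_LIMSEQ)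
  moreover have "(\<Sum>i<n. f i) = VAn \<beta> C \<delta> \<pi> n b" for n
    unfolding f_def by (simp only: sum_lessThan_telescope[of "\<lambda>k. VAn \<beta> C \<delta> \<pi> k b"] VAn.simps(1) diff_zero)
  ultimately have "(\<lambda>n. VAn \<beta> C \<delta> \<pi> n b) \<longlonglongrightarrow> suminf f" by simp
  then show ?thesis unfolding VA_def by (simp add: limI)
qed

lemma VA_bellman:
  assumes nn: "\<forall>q\<in>{1/2..1}. \<beta> q \<ge> 0" and mo: "mono_on {1/2..1} \<beta>" and C: "C > 0"
    and d: "0 \<le> \<delta>" "\<delta> < 1" and pol: "policy \<pi>" and b: "b \<in> {0..1}"
  shows "VA \<beta> C \<delta> \<pi> b = rA \<beta> C b (\<pi> b) + \<delta> *
        (if 1 - \<pi> b \<le> b \<and> b \<le> \<pi> b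
         then yy b (\<pi> b) * VA \<beta> C \<delta> \<pi> (\<pi> b * b / yy b (\<pi> b))
            + zz b (\<pi> b) * VA \<beta> C \<delta> \<pi> ((1 - \<pi> b) * b / zz b (\<pi> b))
         else VA \<beta> C \<delta> \<pi> b)"
proof -
  define q where "q = \<pi> b"
  have b': "0 \<le> b" "b \<le> 1" using b by auto
  have q: "1/2 \<le> q" "q \<le> 1" using pol b unfolding policy_def q_def by auto
  note sf = step_facts[OF b' q]
  note L = VAn_lim[OF nn mo C d pol]
  have L1: "(\<lambda>n. VAn \<beta> C \<delta> \<pi> n (q*b/yy b q)) \<longlonglongrightarrow> VA \<beta> C \<delta> \<pi> (q*b/yy b q)"
    using sf by (intro L) auto
  have L2: "(\<lambda>n. VAn \<beta> C \<delta> \<pi> n ((1-q)*b/zz b q)) \<longlonglongrightarrow> VA \<beta> C \<delta> \<pi> ((1-q)*b/zz b q)"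
    using sf by (intro L) auto
  have L3: "(\<lambda>n. VAn \<beta> C \<delta> \<pi> n b) \<longlonglongrightarrow> VA \<beta> C \<delta> \<pi> b" using b by (intro L)
  have "(\<lambda>n. VAn \<beta> C \<delta> \<pi> (Suc n) b) \<longlonglongrightarrow> VA \<beta> C \<delta> \<pi> b"
    using L3 by (rule LIMSEQ_Suc)
  moreover have "(\<lambda>n. VAn \<beta> C \<delta> \<pi> (Suc n) b) \<longlonglongrightarrow> rA \<beta> C b q + \<delta> *
        (if 1 - q \<le> b \<and> b \<le> q
         then yy b q * VA \<beta> C \<delta> \<pi> (q * b / yy b q)
            + zz b q * VA \<beta> C \<delta> \<pi> ((1 - q) * b / zz b q)
         else VA \<beta> C \<delta> \<pi> b)"
  proof (cases "1 - q \<le> b \<and> b \<le> q")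
    case True
    show ?thesis unfolding VAn.simps Let_def q_def[symmetric] if_P[OF True]
      by (intro tendsto_intros L1 L2)
  next
    case False
    show ?thesis unfolding VAn.simps Let_def q_def[symmetric] if_not_P[OF False]
      by (intro tendsto_intros L3)
  qed
  ultimately show ?thesis unfolding q_def by (rule LIMSEQ_unique)
qed

lemma VAn_nonpos:
  assumes nn: "\<forall>q\<in>{1/2..1}. \<beta> q \<ge> 0" and mo: "mono_on {1/2..1} \<beta>" and C: "C > 0"
    and d: "0 \<le> \<delta>" and pol: "policy \<pi>"
  shows "b \<in> {0..1} \<Longrightarrow> VAn \<beta> C \<delta> \<pi> n b \<le> 0"
proof (induction n arbitrary: b)
  case 0 then show ?case by simp
next
  case (Suc n)
  define q where "q = \<pi> b"
  have b: "0 \<le> b" "b \<le> 1" using Suc.prems by auto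
  have q: "1/2 \<le> q" "q \<le> 1" using pol Suc.prems unfolding policy_def q_def by auto
  note sf = step_facts[OF b q]
  note rb = rA_bounds[OF nn mo C b q]
  have IH1: "VAn \<beta> C \<delta> \<pi> n (q*b/yy b q) \<le> 0" using Suc.IH sf by auto
  have IH2: "VAn \<beta> C \<delta> \<pi> n ((1-q)*b/zz b q) \<le> 0" using Suc.IH sf by auto
  have IH3: "VAn \<beta> C \<delta> \<pi> n b \<le> 0" using Suc.IH Suc.prems by auto
  define E where "E = (if 1 - q \<le> b \<and> b \<le> q
         then yy b q * VAn \<beta> C \<delta> \<pi> n (q * b / yy b q)
            + zz b q * VAn \<beta> C \<delta> \<pi> n ((1 - q) * b / zz b q)
         else VAn \<beta> C \<delta> \<pi> n b)"
  have "E \<le> 0"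
    unfolding E_def using IH1 IH2 IH3 sf
    by (auto intro!: add_nonpos_nonpos mult_nonneg_nonpos)
  then have "\<delta> * E \<le> 0" using d by (simp add: mult_nonneg_nonpos)
  moreover have "VAn \<beta> C \<delta> \<pi> (Suc n) b = rA \<beta> C b q + \<delta> * E"
    unfolding E_def q_def by (simp add: Let_def)
  ultimately show ?case using rb by linarith
qed

lemma VA_nonpos:
  assumes nn: "\<forall>q\<in>{1/2..1}. \<beta> q \<ge> 0" and mo: "mono_on {1/2..1} \<beta>" and C: "C > 0"
    and d: "0 \<le> \<delta>" "\<delta> < 1" and pol: "policy \<pi>" and b: "b \<in> {0..1}"
  shows "VA \<beta> C \<delta> \<pi> b \<le> 0"
  using VAn_lim[OF nn mo C d pol b] VAn_nonpos[OF nn mo C d(1) pol b]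
  by (intro LIMSEQ_le_const2) auto

lemma VAn_refl:
  "VAn \<beta> C \<delta> (\<lambda>x. \<pi> (1 - x)) n (1 - b) = VAn \<beta> C \<delta> \<pi> n b"
proof (induction n arbitrary: b)
  case 0 then show ?case by simp
next
  case (Suc n)
  define q where "q = \<pi> b"
  define V' where "V' = VAn \<beta> C \<delta> (\<lambda>x. \<pi> (1 - x)) n"
  define V where "V = VAn \<beta> C \<delta> \<pi> n"
  have IH: "V' (1 - x) = V x" for x unfolding V_def V'_def by (rule Suc.IH)
  have yz: "yy (1-b) q = zz b q" "zz (1-b) q = yy b q" unfolding yy_def zz_def by algebra+
  have r: "rA \<beta> C (1-b) q = rA \<beta> C b q" unfolding rA_def by (simp add: min_def)
  have t1: "zz b q * V' (q * (1-b) / zz b q) = zz b q * V ((1 - q) * b / zz b q)"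
  proof (cases "zz b q = 0")
    case False
    have "q * (1-b) / zz b q = 1 - (1 - q) * b / zz b q"
      using False unfolding zz_def by (simp add: field_simps)
    then show ?thesis using IH by simp
  qed simp
  have t2: "yy b q * V' ((1-q) * (1-b) / yy b q) = yy b q * V (q * b / yy b q)"
  proof (cases "yy b q = 0")
    case False
    have "(1-q) * (1-b) / yy b q = 1 - q * b / yy b q"
      using False unfolding yy_def by (simp add: field_simps)
    then show ?thesis using IH by simp
  qed simp
  have c: "(1 - q \<le> 1 - b \<and> 1 - b \<le> q) = (1 - q \<le> b \<and> b \<le> q)" by auto
  have "VAn \<beta> C \<delta> (\<lambda>x. \<pi> (1 - x)) (Suc n) (1 - b) = rA \<beta> C (1-b) q + \<delta> *
      (if 1 - q \<le> 1 - b \<and> 1 - b \<le> q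
       then yy (1-b) q * V' (q * (1-b) / yy (1-b) q) + zz (1-b) q * V' ((1 - q) * (1-b) / zz (1-b) q)
       else V' (1-b))" by (simp add: Let_def q_def V'_def)
  also have "\<dots> = rA \<beta> C b q + \<delta> *
      (if 1 - q \<le> b \<and> b \<le> q
       then yy b q * V (q * b / yy b q) + zz b q * V ((1 - q) * b / zz b q)
       else V b)"
    unfolding yz r c t1 t2 IH by (simp add: add.commute)
  also have "\<dots> = VAn \<beta> C \<delta> \<pi> (Suc n) b" by (simp add: Let_def q_def V_def)
  finally show ?case .
qed

lemma VA_abs_bound:
  assumes nn: "\<forall>q\<in>{1/2..1}. \<beta> q \<ge> 0" and mo: "mono_on {1/2..1} \<beta>" and C: "C > 0"
    and d: "0 \<le> \<delta>" "\<delta> < 1" and pol: "policy \<pi>" and b: "b \<in> {0..1}"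
  shows "\<bar>VA \<beta> C \<delta> \<pi> b\<bar> \<le> (\<beta> 1 + C) / (1 - \<delta>)"
  using tendsto_rabs[OF VAn_lim[OF nn mo C d pol b]] VAn_bound[OF nn mo C d pol b]
  by (intro LIMSEQ_le_const2) auto

lemma modify_approx:
  assumes nn: "\<forall>q\<in>{1/2..1}. \<beta> q \<ge> 0" and mo: "mono_on {1/2..1} \<beta>" and C: "C > 0"
    and d: "0 \<le> \<delta>" "\<delta> < 1" and pol: "policy \<pi>"
    and p: "1/2 \<le> p" "p < 1" and bp: "\<beta> p = 0"
    and v0: "VA \<beta> C \<delta> \<pi> 0 = 0" and v1: "VA \<beta> C \<delta> \<pi> 1 = 0"
  shows "b \<in> {0..1} \<Longrightarrow> \<bar>VAn \<beta> C \<delta> (\<pi>(0:=p, 1:=p)) n b - VA \<beta> C \<delta> \<pi> b\<bar>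
           \<le> \<delta>^n * ((\<beta> 1 + C) / (1 - \<delta>))"
proof (induction n arbitrary: b)
  case 0 then show ?case using VA_abs_bound[OF nn mo C d pol] by simp
next
  case (Suc n)
  define K where "K = \<delta>^n * ((\<beta> 1 + C) / (1 - \<delta>))"
  define \<pi>' where "\<pi>' = \<pi>(0:=p, 1:=p)"
  define D where "D = (\<lambda>x. VAn \<beta> C \<delta> \<pi>' n x - VA \<beta> C \<delta> \<pi> x)"
  have b: "0 \<le> b" "b \<le> 1" using Suc.prems by auto
  have IHg: "x \<in> {0..1} \<Longrightarrow> \<bar>D x\<bar> \<le> K" for x unfolding D_def K_def \<pi>'_def by (rule Suc.IH)
  have goal: "\<bar>VAn \<beta> C \<delta> \<pi>' (Suc n) b - VA \<beta> C \<delta> \<pi> b\<bar> \<le> \<delta> * K"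
  proof (cases "b = 0 \<or> b = 1")
    case True
    have pb: "\<pi>' b = p" using True unfolding \<pi>'_def by auto
    have nc: "\<not> (1 - p \<le> b \<and> b \<le> p)" using True p by auto
    have r: "rA \<beta> C b p = 0" using True bp p unfolding rA_def by auto
    have vb: "VA \<beta> C \<delta> \<pi> b = 0" using True v0 v1 by auto
    have "VAn \<beta> C \<delta> \<pi>' (Suc n) b - VA \<beta> C \<delta> \<pi> b = \<delta> * D b"
    proof -
      have "VAn \<beta> C \<delta> \<pi>' (Suc n) b = rA \<beta> C b p + \<delta> * VAn \<beta> C \<delta> \<pi>' n b"
        using nc by (simp only: VAn.simps Let_def pb if_False)
      then show ?thesis unfolding D_def r vb by (simp only: diff_zero add_0_left right_diff_distrib)
    qed
    then show ?thesis using IHg[of b] Suc.prems d by (simp add: abs_mult mult_left_mono)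
  next
    case False
    define q where "q = \<pi> b"
    have pb: "\<pi>' b = q" using False unfolding \<pi>'_def q_def by auto
    have q: "1/2 \<le> q" "q \<le> 1" using pol Suc.prems unfolding policy_def q_def by auto
    note sf = step_facts[OF b q]
    have IH1: "\<bar>D (q*b/yy b q)\<bar> \<le> K" using IHg sf by auto
    have IH2: "\<bar>D ((1-q)*b/zz b q)\<bar> \<le> K" using IHg sf by auto
    have IH3: "\<bar>D b\<bar> \<le> K" using IHg Suc.prems by auto
    define E where "E = (if 1 - q \<le> b \<and> b \<le> q
           then yy b q * D (q * b / yy b q)
              + zz b q * D ((1 - q) * b / zz b q)
           else D b)"
    have "\<bar>E\<bar> \<le> K"
    proof (cases "1 - q \<le> b \<and> b \<le> q")
      case True
      have "\<bar>yy b q * D (q * b / yy b q)\<bar> \<le> yy b q * K"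
        using IH1 sf by (simp add: abs_mult mult_left_mono)
      moreover have "\<bar>zz b q * D ((1-q) * b / zz b q)\<bar> \<le> zz b q * K"
        using IH2 sf by (simp add: abs_mult mult_left_mono)
      ultimately have "\<bar>E\<bar> \<le> (yy b q + zz b q) * K" using True unfolding E_def
        by (simp add: distrib_right)
      then show ?thesis using sf by simp
    next
      case False then show ?thesis using IH3 unfolding E_def if_not_P[OF False] by blast
    qed
    then have "\<bar>\<delta> * E\<bar> \<le> \<delta> * K" using d by (simp add: abs_mult mult_left_mono)
    moreover have "VAn \<beta> C \<delta> \<pi>' (Suc n) b - VA \<beta> C \<delta> \<pi> b = \<delta> * E"
    proof -
      have e1: "VAn \<beta> C \<delta> \<pi>' (Suc n) b = rA \<beta> C b q + \<delta> *
        (if 1 - q \<le> b \<and> b \<le> q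
         then yy b q * VAn \<beta> C \<delta> \<pi>' n (q * b / yy b q)
            + zz b q * VAn \<beta> C \<delta> \<pi>' n ((1 - q) * b / zz b q)
         else VAn \<beta> C \<delta> \<pi>' n b)" by (simp only: VAn.simps Let_def pb)
      have e2: "VA \<beta> C \<delta> \<pi> b = rA \<beta> C b q + \<delta> *
        (if 1 - q \<le> b \<and> b \<le> q
         then yy b q * VA \<beta> C \<delta> \<pi> (q * b / yy b q)
            + zz b q * VA \<beta> C \<delta> \<pi> ((1 - q) * b / zz b q)
         else VA \<beta> C \<delta> \<pi> b)" unfolding q_def by (rule VA_bellman[OF nn mo C d pol Suc.prems])
      show ?thesis
      proof (cases "1 - q \<le> b \<and> b \<le> q")
        case True
        show ?thesis unfolding e1 E_def D_def if_P[OF True] by (subst e2, simp only: if_P[OF True]) (simp add: algebra_simps)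
      next
        case False
        show ?thesis unfolding e1 E_def D_def if_not_P[OF False] by (subst e2, simp only: if_not_P[OF False]) (simp add: algebra_simps)
      qed
    qed
    ultimately show ?thesis by simp
  qed
  then show ?case unfolding K_def \<pi>'_def by (simp only: power_Suc mult.assoc)
qed

theorem lemma8:
  fixes \<beta> :: "real \<Rightarrow> real" and C p \<delta> :: real
  assumes "C > 0" and "1/2 \<le> p" and "p < 1"
    and "\<forall>q\<in>{1/2..1}. \<beta> q \<ge> 0"
    and "mono_on {1/2..1} \<beta>"
    and "continuous_on {1/2..1} \<beta>"
    and "concave_on {1/2..1} \<beta>"
    and "\<beta> p = 0"
    and "0 \<le> \<delta>" and "\<delta> < 1"
    and "\<exists>\<pi>. optimal \<beta> C \<delta> \<pi>"
  shows "(\<forall>b\<in>{0..1}. VAstar \<beta> C \<delta> b \<le> 0)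
       \<and> (\<forall>b\<in>{0..1}. VAstar \<beta> C \<delta> b = VAstar \<beta> C \<delta> (1 - b))
       \<and> VAstar \<beta> C \<delta> 0 = 0 \<and> VAstar \<beta> C \<delta> 1 = 0
       \<and> (\<exists>\<pi>. optimal \<beta> C \<delta> \<pi> \<and> \<pi> 0 = p \<and> \<pi> 1 = p)"
proof -
  note C = assms(1) and p = assms(2,3) and nn = assms(4) and mo = assms(5)
    and bp = assms(8) and d = assms(9,10)
  define P where "P = {\<pi>. policy \<pi>}"
  have pc: "policy (\<lambda>_. p)" using p unfolding policy_def by auto
  have Pne: "P \<noteq> {}" using pc unfolding P_def by auto
  have bdd: "bdd_above ((\<lambda>\<pi>. VA \<beta> C \<delta> \<pi> b) ` P)" if "b \<in> {0..1}" for b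
    using VA_nonpos[OF nn mo C d _ that] unfolding P_def by (intro bdd_aboveI[of _ 0]) auto
  have star: "VAstar \<beta> C \<delta> b = (SUP \<pi>\<in>P. VA \<beta> C \<delta> \<pi> b)" for b
    unfolding VAstar_def P_def ..
  have A: "VAstar \<beta> C \<delta> b \<le> 0" if "b \<in> {0..1}" for b
    unfolding star using VA_nonpos[OF nn mo C d _ that] Pne unfolding P_def
    by (intro cSUP_least) auto
  have upper: "VA \<beta> C \<delta> \<pi> b \<le> VAstar \<beta> C \<delta> b" if "b \<in> {0..1}" "policy \<pi>" for b \<pi>
    unfolding star using bdd[OF that(1)] that(2) unfolding P_def by (intro cSUP_upper) auto
  have cn: "VAn \<beta> C \<delta> (\<lambda>_. p) n 0 = 0" for n
  proof (induction n)
    case (Suc n)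
    have "\<not> (1 - p \<le> 0 \<and> (0::real) \<le> p)" using p by auto
    moreover have "rA \<beta> C 0 p = 0" unfolding rA_def using bp p by simp
    ultimately show ?case using Suc by (simp add: Let_def)
  qed simp
  have cn1: "VAn \<beta> C \<delta> (\<lambda>_. p) n 1 = 0" for n
  proof (induction n)
    case (Suc n)
    have "\<not> (1 - p \<le> 1 \<and> (1::real) \<le> p)" using p by auto
    moreover have "rA \<beta> C 1 p = 0" unfolding rA_def using bp p by simp
    ultimately show ?case using Suc p by (simp add: Let_def)
  qed simp
  have V0: "VAstar \<beta> C \<delta> 0 = 0"
  proof -
    have "VA \<beta> C \<delta> (\<lambda>_. p) 0 = 0" unfolding VA_def cn by (simp add: limI)
    then show ?thesis using upper[OF _ pc, of 0] A[of 0] by simp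
  qed
  have V1: "VAstar \<beta> C \<delta> 1 = 0"
  proof -
    have "VA \<beta> C \<delta> (\<lambda>_. p) 1 = 0" unfolding VA_def cn1 by (simp add: limI)
    then show ?thesis using upper[OF _ pc, of 1] A[of 1] by simp
  qed
  have VA_refl: "VA \<beta> C \<delta> (\<lambda>x. \<pi> (1 - x)) (1 - b) = VA \<beta> C \<delta> \<pi> b" for \<pi> b
    unfolding VA_def VAn_refl ..
  have sym: "VAstar \<beta> C \<delta> b = VAstar \<beta> C \<delta> (1 - b)" if "b \<in> {0..1}" for b
  proof -
    have "(\<lambda>\<pi>. VA \<beta> C \<delta> \<pi> b) ` P = (\<lambda>\<pi>. VA \<beta> C \<delta> \<pi> (1 - b)) ` P"
    proof (intro set_eqI iffI)
      fix v assume "v \<in> (\<lambda>\<pi>. VA \<beta> C \<delta> \<pi> b) ` P"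
      then obtain \<pi> where "\<pi> \<in> P" "v = VA \<beta> C \<delta> \<pi> b" by auto
      moreover have "(\<lambda>x. \<pi> (1 - x)) \<in> P" using \<open>\<pi> \<in> P\<close> unfolding P_def policy_def by auto
      ultimately show "v \<in> (\<lambda>\<pi>. VA \<beta> C \<delta> \<pi> (1 - b)) ` P" using VA_refl
        by (metis image_eqI)
    next
      fix v assume "v \<in> (\<lambda>\<pi>. VA \<beta> C \<delta> \<pi> (1 - b)) ` P"
      then obtain \<pi> where "\<pi> \<in> P" "v = VA \<beta> C \<delta> \<pi> (1 - b)" by auto
      moreover have "(\<lambda>x. \<pi> (1 - x)) \<in> P" using \<open>\<pi> \<in> P\<close> unfolding P_def policy_def by auto
      moreover have "VA \<beta> C \<delta> (\<lambda>x. \<pi> (1 - x)) b = VA \<beta> C \<delta> \<pi> (1 - b)"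
        using VA_refl[of \<pi> "1 - b"] by simp
      ultimately show "v \<in> (\<lambda>\<pi>. VA \<beta> C \<delta> \<pi> b) ` P"
        by (metis image_eqI)
    qed
    then show ?thesis unfolding star by simp
  qed
  obtain \<pi> where opt: "optimal \<beta> C \<delta> \<pi>" using assms(11) by auto
  have pol: "policy \<pi>" using opt unfolding optimal_def by auto
  have v0: "VA \<beta> C \<delta> \<pi> 0 = 0" and v1: "VA \<beta> C \<delta> \<pi> 1 = 0"
    using opt V0 V1 unfolding optimal_def by auto
  define \<pi>' where "\<pi>' = \<pi>(0:=p, 1:=p)"
  have pol': "policy \<pi>'" using pol p unfolding policy_def \<pi>'_def by auto
  have "optimal \<beta> C \<delta> \<pi>'"
    unfolding optimal_def
  proof (intro conjI ballI pol')
    fix b :: real assume b: "b \<in> {0..1}"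
    define K where "K = (\<beta> 1 + C) / (1 - \<delta>)"
    have "(\<lambda>n. \<delta>^n * K) \<longlonglongrightarrow> 0 * K"
      using d by (intro tendsto_intros LIMSEQ_power_zero) auto
    then have "(\<lambda>n. \<delta>^n * K) \<longlonglongrightarrow> 0" by simp
    moreover have bnd: "\<bar>VAn \<beta> C \<delta> \<pi>' n b - VA \<beta> C \<delta> \<pi> b\<bar> \<le> \<delta>^n * K" for n
      using modify_approx[OF nn mo C d pol p bp v0 v1 b] unfolding \<pi>'_def K_def .
    have ev: "eventually (\<lambda>n. norm (VAn \<beta> C \<delta> \<pi>' n b - VA \<beta> C \<delta> \<pi> b) \<le> \<delta>^n * K) sequentially"
      by (intro always_eventually allI) (simp only: real_norm_def bnd)
    ultimately have "(\<lambda>n. VAn \<beta> C \<delta> \<pi>' n b - VA \<beta> C \<delta> \<pi> b) \<longlonglongrightarrow> 0"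
      using Lim_null_comparison[OF ev] by blast
    then have "(\<lambda>n. VAn \<beta> C \<delta> \<pi>' n b) \<longlonglongrightarrow> VA \<beta> C \<delta> \<pi> b"
      using Lim_transform by (metis LIM_zero_cancel)
    then have "VA \<beta> C \<delta> \<pi>' b = VA \<beta> C \<delta> \<pi> b" unfolding VA_def by (rule limI)
    then show "VA \<beta> C \<delta> \<pi>' b = VAstar \<beta> C \<delta> b" using opt b unfolding optimal_def by auto
  qed
  moreover have "\<pi>' 0 = p" "\<pi>' 1 = p" unfolding \<pi>'_def by auto
  ultimately show ?thesis using A sym V0 V1 by blast
qed

end
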